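(* Let $n\ge 3$, let $\mathbf{x}$ be a vertex of $P^n_{\mathrm{SEP}}$ and let $ab$ be an edge with $x_{ab}=1$. Then $\mathrm{Gap}^+(\mathrm{bb}(\mathbf{x},ab))\ge\mathrm{Gap}^+(\mathbf{x})$.
   Context: $K_n=(V_n,E_n)$ is the complete undirected graph on $n$ nodes; $\delta(S)$ is the set of edges with exactly one endpoint in $S$. $P^n_{\mathrm{SEP}}=\{\mathbf{x}\in\mathbb{R}^{E_n} : \sum_{e\in\delta(v)}x_e=2\ \forall v;\ \sum_{e\in\delta(S)}x_e\ge 2\ \forall S \text{ with } 3\le|S|\le n-3;\ 0\le x_e\le 1\}$; a vertex is an extreme point. A cost $\mathbf{c}\in\mathbb{R}^{E_n}_{\ge0}$ is metric if $c_{ik}+c_{kj}\ge c_{ij}$ for all distinct $i,j,k$; $\mathrm{TSP}(\mathbf{c})$ is the minimum cost of a Hamiltonian cycle. $\mathrm{Gap}^+(\mathbf{x})=\sup\{\mathrm{TSP}(\mathbf{c})/(\mathbf{c}\cdot\mathbf{x}) : \mathbf{c}\text{ metric on } K_n\}$. bb-move: for $\mathbf{x}\in P^n_{\mathrm{SEP}}$ and an edge $ab$ with $x_{ab}=1$, $\mathrm{bb}(\mathbf{x},ab)=\mathbf{x}'\in\mathbb{R}^{E_{n+1}}$, where $V_{n+1}=V_n\cup\{w\}$, defined by $x'_{ab}=0$, $x'_{aw}=x'_{wb}=1$, $x'_e=0$ for $e\in\delta(w)\setminus\{aw,wb\}$, and $x'_e=x_e$ for all other edges (it is known that $\mathrm{bb}(\mathbf{x},ab)$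 is a vertex of $P^{n+1}_{\mathrm{SEP}}$ iff $\mathbf{x}$ is a vertex of $P^n_{\mathrm{SEP}}$). *)

theory Defs
  imports Complex_Main "HOL-Library.Extended_Real" "HOL-Combinatorics.Permutations"
begin

text \<open>Nodes of K_n are 0,...,n-1; an edge is a 2-element set of nodes.
  A point of R^{E_n} is a function on edges that vanishes off E_n.\<close>

definition edges :: "nat \<Rightarrow> nat set set" where
  "edges n = {{i, j} | i j. i < n \<and> j < n \<and> i \<noteq> j}"

definition cut :: "nat \<Rightarrow> nat set \<Rightarrow> nat set set" where
  "cut n S = {e \<in> edges n. card (e \<inter> S) = 1}"

definition SEP :: "nat \<Rightarrow> (nat set \<Rightarrow> real) set" where
  "SEP n = {x. (\<forall>e. e \<notin> edges n \<longrightarrow> x e = 0)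
     \<and> (\<forall>v < n. (\<Sum>e\<in>cut n {v}. x e) = 2)
     \<and> (\<forall>S. S \<subseteq> {..<n} \<and> 3 \<le> card S \<and> card S + 3 \<le> n \<longrightarrow> (\<Sum>e\<in>cut n S. x e) \<ge> 2)
     \<and> (\<forall>e\<in>edges n. 0 \<le> x e \<and> x e \<le> 1)}"

definition is_vertex :: "nat \<Rightarrow> (nat set \<Rightarrow> real) \<Rightarrow> bool" where
  "is_vertex n x \<longleftrightarrow> x \<in> SEP n \<and>
     (\<forall>y\<in>SEP n. \<forall>z\<in>SEP n. \<forall>u::real. 0 < u \<and> u < 1 \<and> x = (\<lambda>e. u * y e + (1 - u) * z e) \<longrightarrow> y = z)"

definition metric_cost :: "nat \<Rightarrow> (nat set \<Rightarrow> real) \<Rightarrow> bool" where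
  "metric_cost n c \<longleftrightarrow> (\<forall>e\<in>edges n. 0 \<le> c e) \<and>
     (\<forall>i<n. \<forall>j<n. \<forall>k<n. i \<noteq> j \<and> j \<noteq> k \<and> i \<noteq> k \<longrightarrow> c {i, k} + c {k, j} \<ge> c {i, j})"

text \<open>Hamiltonian cycles on {0..n-1} visit nodes in the cyclic order p 0, ..., p (n-1).\<close>
definition tour_cost :: "nat \<Rightarrow> (nat set \<Rightarrow> real) \<Rightarrow> (nat \<Rightarrow> nat) \<Rightarrow> real" where
  "tour_cost n c p = (\<Sum>i<n. c {p i, p (Suc i mod n)})"

definition TSP :: "nat \<Rightarrow> (nat set \<Rightarrow> real) \<Rightarrow> real" where
  "TSP n c = Min (tour_cost n c ` {p. p permutes {..<n}})"

definition dotp :: "nat \<Rightarrow> (nat set \<Rightarrow> real) \<Rightarrow> (nat set \<Rightarrow> real) \<Rightarrow> real" where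
  "dotp n c x = (\<Sum>e\<in>edges n. c e * x e)"

definition GapPlus :: "nat \<Rightarrow> (nat set \<Rightarrow> real) \<Rightarrow> ereal" where
  "GapPlus n x = (SUP c\<in>{c. metric_cost n c}. ereal (TSP n c / dotp n c x))"

text \<open>bb-move: the new node w is n (so V_{n+1} = {0..n}).\<close>
definition bb :: "nat \<Rightarrow> (nat set \<Rightarrow> real) \<Rightarrow> nat \<Rightarrow> nat \<Rightarrow> (nat set \<Rightarrow> real)" where
  "bb n x a b = (\<lambda>e. if e = {a, b} then 0
                     else if e = {a, n} \<or> e = {n, b} then 1
                     else if n \<in> e then 0
                     else x e)"

end

theory Submission imports Defs begin

lemma modsplit:
  assumes "i < (m::nat)" "t < m"
  shows "(i + t) mod m = (if i + t < m then i + t else i + t - m)"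
proof (cases "i + t < m")
  case True then show ?thesis by simp
next
  case False
  then have "(i + t) mod m = (i + t - m) mod m" by (simp add: le_mod_geq)
  also have "\<dots> = i + t - m" using assms False by simp
  finally show ?thesis using False by simp
qed

lemma rot_bij:
  assumes "0 < (m::nat)"
  shows "bij_betw (\<lambda>i. (i + s) mod m) {..<m} {..<m}"
proof -
  have inj: "inj_on (\<lambda>i. (i + s) mod m) {..<m}"
  proof (rule inj_onI)
    fix i j assume "i \<in> {..<m}" "j \<in> {..<m}" "(i + s) mod m = (j + s) mod m"
    then have ij: "i < m" "j < m" and eq: "(i + s mod m) mod m = (j + s mod m) mod m"
      by (auto simp: mod_add_right_eq)
    have t: "s mod m < m" using assms by simp
    show "i = j" using eq modsplit[OF ij(1) t] modsplit[OF ij(2) t] ij t by (auto split: if_splits)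
  qed
  have "(\<lambda>i. (i + s) mod m) ` {..<m} \<subseteq> {..<m}" using assms by auto
  with inj show ?thesis using endo_inj_surj[of "{..<m}"] by (simp add: bij_betw_def)
qed

lemma rot_perm:
  assumes "0 < (m::nat)"
  shows "(\<lambda>i. if i < m then (i + s) mod m else i) permutes {..<m}"
proof (rule bij_imp_permutes)
  show "bij_betw (\<lambda>i. if i < m then (i + s) mod m else i) {..<m} {..<m}"
    using rot_bij[OF assms, of s] by (rule bij_betw_cong[THEN iffD1, rotated]) auto
qed auto

lemma tour_rot:
  assumes "0 < (m::nat)"
  shows "tour_cost m c (p \<circ> (\<lambda>i. if i < m then (i + s) mod m else i)) = tour_cost m c p"
proof -
  define F where "F j = c {p j, p (Suc j mod m)}" for j
  have "tour_cost m c (p \<circ> (\<lambda>i. if i < m then (i + s) mod m else i)) = (\<Sum>i<m. F ((i + s) mod m))"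
    unfolding tour_cost_def F_def
  proof (rule sum.cong)
    fix i assume "i \<in> {..<m}"
    have "(Suc i mod m + s) mod m = Suc ((i + s) mod m) mod m"
      by (simp add: mod_simps)
    then show "c {(p \<circ> (\<lambda>i. if i < m then (i + s) mod m else i)) i,
          (p \<circ> (\<lambda>i. if i < m then (i + s) mod m else i)) (Suc i mod m)} =
         c {p ((i + s) mod m), p (Suc ((i + s) mod m) mod m)}"
      using \<open>i \<in> {..<m}\<close> assms by auto
  qed simp
  also have "\<dots> = sum F {..<m}"
    using sum.reindex_bij_betw[OF rot_bij[OF assms, of s], of F] by (simp add: comp_def)
  finally show ?thesis unfolding tour_cost_def F_def .
qed

definition dd :: "(nat set \<Rightarrow> real) \<Rightarrow> nat \<Rightarrow> nat \<Rightarrow> real" where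
  "dd c u v = (if u = v then 0 else c {u, v})"

definition ff :: "nat \<Rightarrow> nat \<Rightarrow> nat \<Rightarrow> nat" where
  "ff a n v = (if v = n then a else v)"

definition cc :: "nat \<Rightarrow> nat \<Rightarrow> (nat set \<Rightarrow> real) \<Rightarrow> nat set \<Rightarrow> real" where
  "cc n a c e = dd c (ff a n (Min e)) (ff a n (Max e))"

lemma dd_sym: "dd c u v = dd c v u"
  unfolding dd_def by (auto simp: insert_commute)

lemma cc_pair: "i \<noteq> j \<Longrightarrow> cc n a c {i, j} = dd c (ff a n i) (ff a n j)"
  unfolding cc_def
  by (cases "i < j") (auto simp: min_def max_def dd_sym)

lemma edge_pair: "i < n \<Longrightarrow> j < n \<Longrightarrow> i \<noteq> j \<Longrightarrow> {i, j} \<in> edges n"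
  unfolding edges_def by blast

lemma dd_nonneg: "metric_cost n c \<Longrightarrow> u < n \<Longrightarrow> v < n \<Longrightarrow> 0 \<le> dd c u v"
  unfolding dd_def metric_cost_def using edge_pair by auto

lemma dd_tri:
  assumes "metric_cost n c" "u < n" "v < n" "w < n"
  shows "dd c u w \<le> dd c u v + dd c v w"
proof -
  have nn: "0 \<le> dd c u v" "0 \<le> dd c v w" "0 \<le> dd c u w"
    using dd_nonneg assms by auto
  show ?thesis
  proof (cases "u = w")
    case True then show ?thesis using nn by (simp add: dd_def)
  next
    case False
    show ?thesis
    proof (cases "v = u \<or> v = w")
      case True then show ?thesis using nn by (auto simp: dd_def)
    next
      case F2: False
      then show ?thesis using False assms unfolding metric_cost_def dd_def by auto
    qed
  qed
qed

lemma ff_lt: "a < n \<Longrightarrow> v < Suc n \<Longrightarrow> ff a n v < n"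
  unfolding ff_def by auto

lemma cc_metric:
  assumes "metric_cost n c" "a < n"
  shows "metric_cost (Suc n) (cc n a c)"
  unfolding metric_cost_def
proof (intro conjI ballI allI impI)
  fix e assume "e \<in> edges (Suc n)"
  then obtain i j where e: "e = {i, j}" "i < Suc n" "j < Suc n" "i \<noteq> j"
    unfolding edges_def by blast
  then show "0 \<le> cc n a c e" using cc_pair dd_nonneg[OF assms(1)] ff_lt[OF assms(2)] by simp
next
  fix i j k assume "i < Suc n" "j < Suc n" "k < Suc n" "i \<noteq> j \<and> j \<noteq> k \<and> i \<noteq> k"
  then show "cc n a c {i, j} \<le> cc n a c {i, k} + cc n a c {k, j}"
    using cc_pair dd_tri[OF assms(1)] ff_lt[OF assms(2)] by simp
qed

lemma finite_edges: "finite (edges n)"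
proof -
  have "edges n \<subseteq> Pow {..<n}" unfolding edges_def by auto
  then show ?thesis by (rule finite_subset) simp
qed

lemma edges_Suc: "edges (Suc n) = edges n \<union> (\<lambda>v. {v, n}) ` {..<n}"
  unfolding edges_def
  by (auto simp: less_Suc_eq)

lemma not_in_edge: "e \<in> edges n \<Longrightarrow> n \<notin> e"
  unfolding edges_def by auto

lemma dot_eq:
  assumes "a < n" "b < n" "a \<noteq> b" "x {a, b} = 1"
  shows "dotp (Suc n) (cc n a c) (bb n x a b) = dotp n c x"
proof -
  let ?c = "cc n a c" and ?x = "bb n x a b"
  have ab: "{a, b} \<in> edges n" using assms edge_pair by auto
  have disj: "edges n \<inter> (\<lambda>v. {v, n}) ` {..<n} = {}" using not_in_edge by blast
  have s1: "dotp (Suc n) ?c ?x = (\<Sum>e\<in>edges n. ?c e * ?x e) + (\<Sum>e\<in>(\<lambda>v. {v, n}) ` {..<n}. ?c e * ?x e)"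
    unfolding dotp_def edges_Suc by (rule sum.union_disjoint) (auto simp: finite_edges disj)
  have inj: "inj_on (\<lambda>v. {v, n}) {..<n}"
    by (rule inj_onI) (auto simp: doubleton_eq_iff)
  have s2: "(\<Sum>e\<in>(\<lambda>v. {v, n}) ` {..<n}. ?c e * ?x e) = (\<Sum>v<n. ?c {v, n} * ?x {v, n})"
    by (rule sum.reindex[OF inj, unfolded comp_def])
  also have "\<dots> = (\<Sum>v<n. if v = b then c {a, b} else 0)"
  proof (rule sum.cong)
    fix v assume v: "v \<in> {..<n}"
    have "?x {v, n} = (if v = a \<or> v = b then 1 else 0)"
      using v assms unfolding bb_def by (auto simp: doubleton_eq_iff)
    moreover have "?c {v, n} = dd c v a" using v cc_pair[of v n n a c] by (simp add: ff_def)
    ultimately show "?c {v, n} * ?x {v, n} = (if v = b then c {a, b} else 0)"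
      using assms by (auto simp: dd_def insert_commute)
  qed simp
  also have "\<dots> = c {a, b}" using assms by simp
  finally have s3: "(\<Sum>e\<in>(\<lambda>v. {v, n}) ` {..<n}. ?c e * ?x e) = c {a, b}" .
  have s4: "(\<Sum>e\<in>edges n. ?c e * ?x e) = (\<Sum>e\<in>edges n. if e = {a, b} then 0 else c e * x e)"
  proof (rule sum.cong)
    fix e assume e: "e \<in> edges n"
    then obtain i j where ij: "e = {i, j}" "i < n" "j < n" "i \<noteq> j"
      unfolding edges_def by blast
    have "?c e = c e" using ij cc_pair[of i j n a c] by (simp add: ff_def dd_def)
    moreover have "n \<notin> e" using not_in_edge e by blast
    ultimately show "?c e * ?x e = (if e = {a, b} then 0 else c e * x e)"
      unfolding bb_def by auto
  qed simp
  have s5: "(\<Sum>e\<in>edges n. if e = {a, b} then 0 else c e * x e) = (\<Sum>e\<in>edges n - {{a, b}}. c e * x e)"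
    by (rule sum.mono_neutral_cong_right) (auto simp: finite_edges)
  have s6: "dotp n c x = c {a, b} * x {a, b} + (\<Sum>e\<in>edges n - {{a, b}}. c e * x e)"
    unfolding dotp_def by (rule sum.remove[OF finite_edges ab])
  show ?thesis using s1 s3 s4 s5 s6 assms by simp
qed


lemma tsp_le:
  assumes "metric_cost n c" "a < n" "n \<ge> 3"
  shows "TSP n c \<le> TSP (Suc n) (cc n a c)"
proof -
  let ?c = "cc n a c"
  have fin: "finite {p. p permutes {..<m}}" for m :: nat by (rule finite_permutations) simp
  have ne: "{p. p permutes {..<m}} \<noteq> {}" for m :: nat using permutes_id by blast
  have "TSP (Suc n) ?c \<in> tour_cost (Suc n) ?c ` {p. p permutes {..<Suc n}}"
    unfolding TSP_def by (rule Min_in) (use fin ne in auto)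
  then obtain p where p: "p permutes {..<Suc n}" "TSP (Suc n) ?c = tour_cost (Suc n) ?c p" by auto
  have "n \<in> p ` {..<Suc n}" using permutes_imp_bij[OF p(1)] by (simp add: bij_betw_def)
  then obtain k where k: "k < Suc n" "p k = n" by auto
  define r where "r = (\<lambda>i. if i < Suc n then (i + Suc k) mod Suc n else i)"
  define q where "q = p \<circ> r"
  have r: "r permutes {..<Suc n}" unfolding r_def by (rule rot_perm) simp
  have q1: "q permutes {..<Suc n}" unfolding q_def by (rule permutes_compose[OF r p(1)])
  have "(n + Suc k) mod Suc n = k" using k(1)
  proof -
    have "n + Suc k = k + Suc n" by simp
    moreover have "(k + Suc n) mod Suc n = k mod Suc n" by (rule mod_add_self2)
    ultimately show ?thesis using k(1) by (simp only: mod_less)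
  qed
  then have qn: "q n = n" unfolding q_def r_def using k by simp
  have q: "q permutes {..<n}" by (rule permutes_superset[OF q1]) (use qn in auto)
  have tq: "tour_cost (Suc n) ?c q = tour_cost (Suc n) ?c p"
    unfolding q_def r_def by (rule tour_rot) simp
  have qlt: "i < n \<Longrightarrow> q i < n" for i using permutes_in_image[OF q] by simp
  have qinj: "i < n \<Longrightarrow> j < n \<Longrightarrow> q i = q j \<Longrightarrow> i = j" for i j
    using permutes_inj[OF q] by (meson injD)
  obtain m where m: "n = Suc m" using assms(3) by (cases n) auto
  have m2: "m \<ge> 2" using m assms(3) by simp
  have cq: "?c {q i, q j} = c {q i, q j}" if "i < n" "j < n" "i \<noteq> j" for i j
    using cc_pair[of "q i" "q j" n a c] qinj[OF that(1,2)] that qlt[OF that(1)] qlt[OF that(2)]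
    by (auto simp: ff_def dd_def)
  have A: "tour_cost (Suc n) ?c q = (\<Sum>i<m. ?c {q i, q (Suc i)}) + ?c {q m, n} + ?c {n, q 0}"
  proof -
    have "tour_cost (Suc n) ?c q = (\<Sum>i<Suc (Suc m). ?c {q i, q (Suc i mod Suc (Suc m))})"
      unfolding tour_cost_def m ..
    also have "\<dots> = (\<Sum>i<m. ?c {q i, q (Suc i mod Suc (Suc m))}) + ?c {q m, q (Suc m)} + ?c {q (Suc m), q 0}"
      by simp
    also have "(\<Sum>i<m. ?c {q i, q (Suc i mod Suc (Suc m))}) = (\<Sum>i<m. ?c {q i, q (Suc i)})"
      by (rule sum.cong) auto
    finally show ?thesis using qn m by simp
  qed
  have B: "tour_cost n c q = (\<Sum>i<m. c {q i, q (Suc i)}) + c {q m, q 0}"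
  proof -
    have "tour_cost n c q = (\<Sum>i<Suc m. c {q i, q (Suc i mod Suc m)})"
      unfolding tour_cost_def m ..
    also have "\<dots> = (\<Sum>i<m. c {q i, q (Suc i mod Suc m)}) + c {q m, q 0}"
      by simp
    also have "(\<Sum>i<m. c {q i, q (Suc i mod Suc m)}) = (\<Sum>i<m. c {q i, q (Suc i)})"
      by (rule sum.cong) auto
    finally show ?thesis .
  qed
  have C: "(\<Sum>i<m. ?c {q i, q (Suc i)}) = (\<Sum>i<m. c {q i, q (Suc i)})"
    by (rule sum.cong) (use cq m in auto)
  have D1: "?c {q m, n} = dd c (q m) a"
    using cc_pair[of "q m" n n a c] qlt[of m] m by (simp add: ff_def)
  have D2: "?c {n, q 0} = dd c a (q 0)"
    using cc_pair[of n "q 0" n a c] qlt[of 0] m by (simp add: ff_def)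
  have D3: "c {q m, q 0} = dd c (q m) (q 0)"
  proof -
    have "q m \<noteq> q 0" using qinj[of m 0] m m2 by auto
    then show ?thesis by (simp add: dd_def)
  qed
  have T: "dd c (q m) (q 0) \<le> dd c (q m) a + dd c a (q 0)"
    by (rule dd_tri[OF assms(1)]) (use qlt m assms(2) in auto)
  have "tour_cost n c q \<le> tour_cost (Suc n) ?c q"
    using A B C D1 D2 D3 T by linarith
  moreover have "TSP n c \<le> tour_cost n c q"
    unfolding TSP_def by (rule Min_le) (use fin q in auto)
  ultimately show ?thesis using tq p(2) by simp
qed

theorem mainTheorem5:
  fixes n :: nat and x :: "nat set \<Rightarrow> real" and a b :: nat
  assumes "n \<ge> 3"
    and "is_vertex n x"
    and "a < n" and "b < n" and "a \<noteq> b"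
    and "x {a, b} = 1"
  shows "GapPlus (Suc n) (bb n x a b) \<ge> GapPlus n x"
  unfolding GapPlus_def
proof (rule SUP_mono)
  fix c assume "c \<in> {c. metric_cost n c}"
  then have mc: "metric_cost n c" by simp
  have xs: "x \<in> SEP n" using assms(2) unfolding is_vertex_def by (rule conjunct1)
  have D: "0 \<le> dotp n c x"
    unfolding dotp_def
    by (rule sum_nonneg) (use xs mc in \<open>auto simp: SEP_def metric_cost_def\<close>)
  have "TSP n c / dotp n c x \<le> TSP (Suc n) (cc n a c) / dotp (Suc n) (cc n a c) (bb n x a b)"
    unfolding dot_eq[of a n b x c, OF assms(3-6)]
    by (rule divide_right_mono[OF tsp_le[OF mc assms(3,1)] D])
  then show "\<exists>c'\<in>{c. metric_cost (Suc n) c}. ereal (TSP n c / dotp n c x) \<le> ereal (TSP (Suc n) c' / dotp (Suc n) c' (bb n x a b))"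
    using cc_metric[OF mc assms(3)] by auto
qed

end
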